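(* A homomorphism $h:\mathbf A\to\mathbf B$ of $\sigma$-structures is a non-retraction if and only if there is a component $\mathbf C$ of $\mathbf B$ such that for no substructure $\mathbf D\subseteq\mathbf A$ is the restriction of $h$ to $\mathbf D$ an isomorphism $\mathbf D\to\mathbf C$.
   Context: A type $\sigma$ is a finite set of relation symbols with arities; a $\sigma$-structure $\mathbf A$ is a finite set $V(\mathbf A)$ with an $r$-ary relation $R(\mathbf A)$ for each $R$ of arity $r$; homomorphisms are relation-preserving maps. $\mathbf A$ is a substructure of $\mathbf B$ if $V(\mathbf A)\subseteq V(\mathbf B)$ and $R(\mathbf A)\subseteq R(\mathbf B)$ for all $R$. The incidence multigraph of $\mathbf B$ is bipartite with parts $V(\mathbf B)$ and the blocks $(R,(x_1,\dots,x_r))$, $(x_1,\dots,x_r)\in R(\mathbf B)$, with an edge from $x_i$ to the block for each $i$; the components of $\mathbf B$ are the substructures determined by the connected components of this multigraph. A homomorphism $h:\mathbf A\to\mathbf B$ is a retraction if there is a homomorphism $g:\mathbf B\to\mathbf A$ with $h\circ g$ the identity of $\mathbf B$; otherwise it is a non-retraction. *)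

theory Defs
  imports Main
begin

text \<open>A type sigma is a finite set of relation symbols together with an arity function.
  A structure has a vertex set and, for each relation symbol, a set of tuples (lists).\<close>

record ('v, 'r) struct =
  V :: "'v set"
  Rel :: "'r \<Rightarrow> 'v list set"

definition is_type :: "'r set \<Rightarrow> bool" where
  "is_type sigma \<longleftrightarrow> finite sigma"

definition is_struct :: "'r set \<Rightarrow> ('r \<Rightarrow> nat) \<Rightarrow> ('v, 'r) struct \<Rightarrow> bool" where
  "is_struct sigma ar A \<longleftrightarrow> finite (V A) \<and>
     (\<forall>R. R \<notin> sigma \<longrightarrow> Rel A R = {}) \<and>
     (\<forall>R\<in>sigma. \<forall>t\<in>Rel A R. length t = ar R \<and> set t \<subseteq> V A)"

definition is_hom :: "('a, 'r) struct \<Rightarrow> ('b, 'r) struct \<Rightarrow> ('a \<Rightarrow> 'b) \<Rightarrow> bool" where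
  "is_hom A B h \<longleftrightarrow> (\<forall>x\<in>V A. h x \<in> V B) \<and> (\<forall>R. \<forall>t\<in>Rel A R. map h t \<in> Rel B R)"

definition is_retraction :: "('a, 'r) struct \<Rightarrow> ('b, 'r) struct \<Rightarrow> ('a \<Rightarrow> 'b) \<Rightarrow> bool" where
  "is_retraction A B h \<longleftrightarrow> is_hom A B h \<and>
     (\<exists>g. is_hom B A g \<and> (\<forall>y\<in>V B. h (g y) = y))"

definition substructure :: "'r set \<Rightarrow> ('r \<Rightarrow> nat) \<Rightarrow> ('v, 'r) struct \<Rightarrow> ('v, 'r) struct \<Rightarrow> bool" where
  "substructure sigma ar D A \<longleftrightarrow> is_struct sigma ar D \<and> V D \<subseteq> V A \<and> (\<forall>R. Rel D R \<subseteq> Rel A R)"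

text \<open>Nodes of the incidence multigraph: vertices and blocks (R, tuple).\<close>

datatype ('v, 'r) inode = VNode 'v | BNode 'r "'v list"

definition inodes :: "('v, 'r) struct \<Rightarrow> ('v, 'r) inode set" where
  "inodes B = VNode ` V B \<union> {BNode R t | R t. t \<in> Rel B R}"

definition iedges :: "('v, 'r) struct \<Rightarrow> (('v, 'r) inode \<times> ('v, 'r) inode) set" where
  "iedges B = {(VNode x, BNode R t) | x R t. t \<in> Rel B R \<and> x \<in> set t}
            \<union> {(BNode R t, VNode x) | x R t. t \<in> Rel B R \<and> x \<in> set t}"

definition iconn :: "('v, 'r) struct \<Rightarrow> (('v, 'r) inode \<times> ('v, 'r) inode) set" where
  "iconn B = Id_on (inodes B) \<union> (iedges B)\<^sup>+"

definition struct_of_nodes :: "('v, 'r) inode set \<Rightarrow> ('v, 'r) struct" where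
  "struct_of_nodes K = \<lparr> V = {x. VNode x \<in> K}, Rel = (\<lambda>R. {t. BNode R t \<in> K}) \<rparr>"

definition is_component :: "('v, 'r) struct \<Rightarrow> ('v, 'r) struct \<Rightarrow> bool" where
  "is_component C B \<longleftrightarrow> (\<exists>K \<in> inodes B // iconn B. C = struct_of_nodes K)"

definition restr_iso :: "('a \<Rightarrow> 'b) \<Rightarrow> ('a, 'r) struct \<Rightarrow> ('b, 'r) struct \<Rightarrow> bool" where
  "restr_iso h D C \<longleftrightarrow> bij_betw h (V D) (V C) \<and>
     (\<forall>R. \<forall>t. set t \<subseteq> V D \<longrightarrow> (t \<in> Rel D R \<longleftrightarrow> map h t \<in> Rel C R))"

end

theory Submission
  imports Defs
begin

lemma rel_in_V:
  assumes "is_struct sigma ar B" "t \<in> Rel B R"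
  shows "set t \<subseteq> V B"
  using assms unfolding is_struct_def by (cases "R \<in> sigma") auto

lemma iedges_sub:
  assumes "is_struct sigma ar B"
  shows "iedges B \<subseteq> inodes B \<times> inodes B"
  using rel_in_V[OF assms] unfolding iedges_def inodes_def by blast

lemma iconn_equiv:
  assumes "is_struct sigma ar B"
  shows "equiv (inodes B) (iconn B)"
proof -
  have sub: "iconn B \<subseteq> inodes B \<times> inodes B"
    using iedges_sub[OF assms] trancl_subset_Sigma[of "iedges B" "inodes B"]
    unfolding iconn_def by auto
  have se: "sym (iedges B)" unfolding sym_def iedges_def by blast
  have "sym ((iedges B)\<^sup>+)" using sym_trancl[OF se] .
  then have sym: "sym (iconn B)" unfolding iconn_def sym_def by auto
  have trans: "trans (iconn B)"
    unfolding trans_def iconn_def by (auto intro: trancl_trans)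
  show ?thesis unfolding equiv_def refl_on_def using sub sym trans
    by (auto simp: iconn_def)
qed

lemma comp_sub:
  assumes "is_struct sigma ar B" "K \<in> inodes B // iconn B"
  shows "V (struct_of_nodes K) \<subseteq> V B" "Rel (struct_of_nodes K) R \<subseteq> Rel B R"
proof -
  have "K \<subseteq> inodes B"
    by (rule in_quotient_imp_subset[OF iconn_equiv[OF assms(1)] assms(2)])
  then show "V (struct_of_nodes K) \<subseteq> V B" "Rel (struct_of_nodes K) R \<subseteq> Rel B R"
    unfolding struct_of_nodes_def inodes_def by auto
qed

lemma comp_closed:
  assumes "is_struct sigma ar B" "K \<in> inodes B // iconn B"
    "t \<in> Rel (struct_of_nodes K) R"
  shows "set t \<subseteq> V (struct_of_nodes K)"
proof
  fix x assume x: "x \<in> set t"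
  have eq: "equiv (inodes B) (iconn B)" by (rule iconn_equiv[OF assms(1)])
  have bt: "BNode R t \<in> K" using assms(3) unfolding struct_of_nodes_def by simp
  have tB: "t \<in> Rel B R" using comp_sub(2)[OF assms(1,2)] assms(3) by blast
  have "(BNode R t, VNode x) \<in> iedges B" using tB x unfolding iedges_def by blast
  then have e: "(BNode R t, VNode x) \<in> iconn B" unfolding iconn_def by auto
  have "VNode x \<in> K"
    by (rule in_quotient_imp_closed[OF eq assms(2) bt e])
  then show "x \<in> V (struct_of_nodes K)" unfolding struct_of_nodes_def by simp
qed

theorem proposition6p1:
  fixes sigma :: "'r set" and ar :: "'r \<Rightarrow> nat"
    and A :: "('a, 'r) struct" and B :: "('b, 'r) struct" and h :: "'a \<Rightarrow> 'b"
  assumes "is_type sigma"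
    and "is_struct sigma ar A" and "is_struct sigma ar B"
    and "is_hom A B h"
  shows "\<not> is_retraction A B h \<longleftrightarrow>
    (\<exists>C. is_component C B \<and>
       (\<forall>D. substructure sigma ar D A \<longrightarrow> \<not> restr_iso h D C))"
proof
  assume nr: "\<not> is_retraction A B h"
  show "\<exists>C. is_component C B \<and>
       (\<forall>D. substructure sigma ar D A \<longrightarrow> \<not> restr_iso h D C)"
  proof (rule ccontr)
    assume "\<not> ?thesis"
    then have "\<forall>C. \<exists>D. is_component C B \<longrightarrow> substructure sigma ar D A \<and> restr_iso h D C"
      by blast
    then obtain F where F: "\<And>C. is_component C B \<Longrightarrow> substructure sigma ar (F C) A \<and> restr_iso h (F C) C"
      by metis
    have eq: "equiv (inodes B) (iconn B)" by (rule iconn_equiv[OF assms(3)])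
    define comp where "comp y = struct_of_nodes (iconn B `` {VNode y})" for y
    define g where "g y = inv_into (V (F (comp y))) h y" for y
    have key: "\<And>K y. K \<in> inodes B // iconn B \<Longrightarrow> y \<in> V (struct_of_nodes K) \<Longrightarrow>
        comp y = struct_of_nodes K \<and> g y \<in> V (F (struct_of_nodes K)) \<and> h (g y) = y"
    proof -
      fix K y assume K: "K \<in> inodes B // iconn B" and y: "y \<in> V (struct_of_nodes K)"
      have yK: "VNode y \<in> K" using y unfolding struct_of_nodes_def by simp
      obtain a where a: "a \<in> inodes B" "K = iconn B `` {a}" using K by (rule quotientE)
      have "(a, VNode y) \<in> iconn B" using yK a by simp
      then have "iconn B `` {a} = iconn B `` {VNode y}" using eq by (simp add: equiv_class_eq_iff)
      then have "iconn B `` {VNode y} = K" using a by simp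
      then have c: "comp y = struct_of_nodes K" unfolding comp_def by simp
      have ic: "is_component (struct_of_nodes K) B" unfolding is_component_def using K by blast
      then have bij: "bij_betw h (V (F (struct_of_nodes K))) (V (struct_of_nodes K))"
        using F unfolding restr_iso_def by blast
      have "g y = inv_into (V (F (struct_of_nodes K))) h y" unfolding g_def c ..
      then show "comp y = struct_of_nodes K \<and> g y \<in> V (F (struct_of_nodes K)) \<and> h (g y) = y"
        using c bij y by (simp add: bij_betw_inv_into_left bij_betw_imp_surj_on inv_into_into
            f_inv_into_f)
    qed
    have "is_retraction A B h"
      unfolding is_retraction_def
    proof (intro conjI exI[of _ g])
      show "is_hom A B h" by (rule assms(4))
      have vy: "\<And>y. y \<in> V B \<Longrightarrow> g y \<in> V A \<and> h (g y) = y"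
      proof -
        fix y assume y: "y \<in> V B"
        define K where "K = iconn B `` {VNode y}"
        have K: "K \<in> inodes B // iconn B" unfolding K_def
          by (rule quotientI) (use y in \<open>simp add: inodes_def\<close>)
        have "VNode y \<in> K" unfolding K_def iconn_def using y by (auto simp: inodes_def)
        then have yv: "y \<in> V (struct_of_nodes K)" unfolding struct_of_nodes_def by simp
        have ic: "is_component (struct_of_nodes K) B" unfolding is_component_def using K by blast
        then show "g y \<in> V A \<and> h (g y) = y" using key[OF K yv] F[OF ic]
          unfolding substructure_def by blast
      qed
      then show "\<forall>y\<in>V B. h (g y) = y" by blast
      show "is_hom B A g" unfolding is_hom_def
      proof (intro conjI ballI allI)
        fix y assume "y \<in> V B" then show "g y \<in> V A" using vy by blast
      next
        fix R t assume t: "t \<in> Rel B R"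
        define K where "K = iconn B `` {BNode R t}"
        have K: "K \<in> inodes B // iconn B" unfolding K_def
          by (rule quotientI) (use t in \<open>auto simp add: inodes_def\<close>)
        have "BNode R t \<in> K" unfolding K_def iconn_def using t by (auto simp: inodes_def)
        then have tC: "t \<in> Rel (struct_of_nodes K) R" unfolding struct_of_nodes_def by simp
        have st: "set t \<subseteq> V (struct_of_nodes K)" by (rule comp_closed[OF assms(3) K tC])
        have ic: "is_component (struct_of_nodes K) B" unfolding is_component_def using K by blast
        have s1: "set (map g t) \<subseteq> V (F (struct_of_nodes K))" using key[OF K] st by auto
        have s2: "map h (map g t) = t" using key[OF K] st by (induct t) auto
        have "map g t \<in> Rel (F (struct_of_nodes K)) R"
          using F[OF ic] s1 s2 tC unfolding restr_iso_def by metis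
        then show "map g t \<in> Rel A R" using F[OF ic] unfolding substructure_def by blast
      qed
    qed
    with nr show False by blast
  qed
next
  assume "\<exists>C. is_component C B \<and>
       (\<forall>D. substructure sigma ar D A \<longrightarrow> \<not> restr_iso h D C)"
  then obtain C where C: "is_component C B"
    and nD: "\<And>D. substructure sigma ar D A \<Longrightarrow> \<not> restr_iso h D C" by blast
  show "\<not> is_retraction A B h"
  proof
    assume "is_retraction A B h"
    then obtain g where g: "is_hom B A g" and hg: "\<And>y. y \<in> V B \<Longrightarrow> h (g y) = y"
      unfolding is_retraction_def by blast
    obtain K where K: "K \<in> inodes B // iconn B" and CK: "C = struct_of_nodes K"
      using C unfolding is_component_def by blast
    have VC: "V C \<subseteq> V B" and RC: "\<And>R. Rel C R \<subseteq> Rel B R"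
      using comp_sub[OF assms(3) K] CK by auto
    have cl: "\<And>t R. t \<in> Rel C R \<Longrightarrow> set t \<subseteq> V C"
      using comp_closed[OF assms(3) K] CK by auto
    define D where "D = \<lparr> V = g ` V C, Rel = (\<lambda>R. map g ` Rel C R) \<rparr>"
    have fin: "finite (V B)" using assms(3) unfolding is_struct_def by blast
    have hid: "\<And>s. set s \<subseteq> V C \<Longrightarrow> map h (map g s) = s"
    proof -
      fix s :: "'b list" assume "set s \<subseteq> V C"
      then show "map h (map g s) = s" using VC hg by (induct s) auto
    qed
    have sub: "substructure sigma ar D A"
      unfolding substructure_def is_struct_def
    proof (intro conjI allI impI ballI)
      show "finite (V D)" unfolding D_def using fin VC by (auto intro: finite_subset)
    next
      fix R assume "R \<notin> sigma"
      then have "Rel B R = {}" using assms(3) unfolding is_struct_def by blast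
      then show "Rel D R = {}" using RC[of R] unfolding D_def by auto
    next
      fix R t assume R: "R \<in> sigma" and t: "t \<in> Rel D R"
      then obtain s where s: "s \<in> Rel C R" "t = map g s" unfolding D_def by auto
      have "length s = ar R" using assms(3) R RC s(1) unfolding is_struct_def by blast
      then show "length t = ar R" using s by simp
      show "set t \<subseteq> V D" using s cl[OF s(1)] unfolding D_def by auto
    next
      show "V D \<subseteq> V A" using g VC unfolding D_def is_hom_def by auto
    next
      fix R show "Rel D R \<subseteq> Rel A R" using g RC[of R] unfolding D_def is_hom_def by auto
    qed
    have "restr_iso h D C"
      unfolding restr_iso_def
    proof (intro conjI allI impI)
      have "V D = g ` V C" unfolding D_def by simp
      moreover have "bij_betw h (g ` V C) (V C)" unfolding bij_betw_def inj_on_def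
      proof (intro conjI ballI impI)
        fix x y assume "x \<in> g ` V C" "y \<in> g ` V C" "h x = h y"
        then obtain a b where ab: "a \<in> V C" "b \<in> V C" "x = g a" "y = g b" "h x = h y" by blast
        then have "a = b" using VC hg by (metis subsetD)
        then show "x = y" using ab by simp
      next
        show "h ` g ` V C = V C"
        proof
          show "h ` g ` V C \<subseteq> V C" using VC hg by auto
          show "V C \<subseteq> h ` g ` V C" using VC hg by (force simp: image_image)
        qed
      qed
      ultimately show "bij_betw h (V D) (V C)" by simp
    next
      fix R t assume st: "set t \<subseteq> V D"
      show "t \<in> Rel D R \<longleftrightarrow> map h t \<in> Rel C R"
      proof
        assume "t \<in> Rel D R"
        then obtain s where s: "s \<in> Rel C R" "t = map g s" unfolding D_def by auto
        then show "map h t \<in> Rel C R" using hid[OF cl[OF s(1)]] by simp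
      next
        assume m: "map h t \<in> Rel C R"
        have "\<forall>x\<in>set t. g (h x) = x"
        proof
          fix x assume "x \<in> set t"
          then obtain a where "a \<in> V C" "x = g a" using st unfolding D_def by auto
          then show "g (h x) = x" using VC hg by (metis subsetD)
        qed
        then have "map g (map h t) = t" by (induct t) auto
        then show "t \<in> Rel D R" using m unfolding D_def by force
      qed
    qed
    with nD[OF sub] show False by blast
  qed
qed

end
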